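(* Let $k_1,k_2$ be nonnegative integers with $k_1+k_2\ge1$, and let $0<x<1$. Then $$ {}_3F_2\!\left(\begin{matrix}1,\frac{k_1+k_2}{2}+1,\frac{k_1+k_2+1}{2}\\ k_1+1,k_2+1\end{matrix};x\right)=\frac{k_1!\,k_2!}{(k_1+k_2)!}\frac{2^{k_1+k_2}}{x^{k_2}}\frac{(1+\sqrt{1-x})^{k_2-k_1}}{\sqrt{1-x}}+\frac{k_2}{(k_1+k_2)\sqrt{1-x}}\left[{}_2F_1\!\left(\begin{matrix}1,k_1+k_2\\ k_1+1\end{matrix};\tfrac12-\tfrac12\sqrt{1-x}\right)-{}_2F_1\!\left(\begin{matrix}1,k_1+k_2\\ k_1+1\end{matrix};\tfrac12+\tfrac12\sqrt{1-x}\right)\right],$$ and $$ {}_3F_2\!\left(\begin{matrix}1,\frac{k_1+k_2}{2}+1,\frac{k_1+k_2+1}{2}\\ k_1+1,k_2+1\end{matrix};x\right)=\frac{1}{(k_1+k_2)\sqrt{1-x}}\left[k_2\,{}_2F_1\!\left(\begin{matrix}1,k_1+k_2\\ k_1+1\end{matrix};\tfrac12-\tfrac12\sqrt{1-x}\right)+k_1\,{}_2F_1\!\left(\begin{matrix}1,k_1+k_2\\ k_2+1\end{matrix};\tfrac12-\tfrac12\sqrt{1-x}\right)\right].$$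
   Context: For $|x|<1$, ${}_2F_1\!\left(\begin{matrix}a,b\\ d\end{matrix};x\right)=\sum_{n\ge0}\frac{(a)_n(b)_n}{(d)_n}\frac{x^n}{n!}$ and ${}_3F_2\!\left(\begin{matrix}a,b,c\\ d,e\end{matrix};x\right)=\sum_{n\ge0}\frac{(a)_n(b)_n(c)_n}{(d)_n(e)_n}\frac{x^n}{n!}$, with $(q)_0=1$, $(q)_n=q(q+1)\cdots(q+n-1)$. *)

theory Defs
  imports "HOL-Analysis.Analysis"
begin

text \<open>Generalized hypergeometric series as the (real) power series sum, as in the paper
  (meant for |x| < 1).\<close>

definition hyp2F1 :: "real \<Rightarrow> real \<Rightarrow> real \<Rightarrow> real \<Rightarrow> real" where
  "hyp2F1 a b d x = (\<Sum>n. pochhammer a n * pochhammer b n / pochhammer d n * x ^ n / fact n)"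

definition hyp3F2 :: "real \<Rightarrow> real \<Rightarrow> real \<Rightarrow> real \<Rightarrow> real \<Rightarrow> real \<Rightarrow> real" where
  "hyp3F2 a b c d e x = (\<Sum>n. pochhammer a n * pochhammer b n * pochhammer c n
      / (pochhammer d n * pochhammer e n) * x ^ n / fact n)"

end

theory Submission
  imports Defs
begin


lemma poch_fact: "pochhammer (real m + 1) n = fact (m + n) / fact m"
proof (induction n)
  case 0 then show ?case by simp
next
  case (Suc n)
  have "pochhammer (real m + 1) (Suc n) = fact (m + n) / fact m * (real (m + n) + 1)"
    by (simp add: pochhammer_Suc Suc)
  also have "\<dots> = fact (m + Suc n) / fact m" by (simp add: algebra_simps)
  finally show ?case .
qed

lemma negbin:
  fixes w :: real assumes "\<bar>w\<bar> < 1"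
  shows "(\<lambda>n. real ((n + j) choose j) * w ^ n) sums (1 / (1 - w) ^ Suc j)"
proof -
  have "(\<lambda>n. ((- real (Suc j)) gchoose n) * (-w) ^ n) sums (1 + (-w)) powr (- real (Suc j))"
    by (rule gen_binomial_real) (use assms in simp)
  moreover have "((- real (Suc j)) gchoose n) * (-w) ^ n = real ((n + j) choose j) * w ^ n" for n
  proof -
    have "((- real (Suc j)) gchoose n) = (-1)^n * ((real (n + j)) gchoose n)"
      by (subst gbinomial_minus) (simp add: algebra_simps)
    also have "(real (n + j)) gchoose n = real ((n+j) choose n)"
      by (simp add: binomial_gbinomial)
    also have "(n+j) choose n = (n+j) choose j"
      by (metis add_diff_cancel_left' binomial_symmetric le_add1)
    finally have g: "((- real (Suc j)) gchoose n) = (-1)^n * real ((n + j) choose j)" .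
    have m: "(-w) ^ n = (-1)^n * w^n"
      using power_mult_distrib[of "-1::real" w n] by simp
    have o: "(-1::real)^n * (-1)^n = 1"
      by (induct n) auto
    have "((- real (Suc j)) gchoose n) * (-w) ^ n = ((-1)^n * (-1)^n) * (real ((n + j) choose j) * w ^ n)"
      unfolding g m by (simp only: mult_ac)
    then show ?thesis unfolding o by simp
  qed
  moreover have "(1 + (-w)) powr (- real (Suc j)) = 1 / (1 - w) ^ Suc j"
  proof -
    have "(1 + (-w)) powr (- real (Suc j)) = (1 - w) powr (- real (Suc j))" by simp
    also have "\<dots> = 1 / (1 - w) powr (real (Suc j))" by (rule powr_minus_divide)
    also have "\<dots> = 1 / (1 - w) ^ Suc j" using assms by (subst powr_realpow) auto
    finally show ?thesis .
  qed
  ultimately show ?thesis by simp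
qed



lemma central_coeff: "((-1/2::real) gchoose n) * (-4) ^ n = real ((2*n) choose n)"
proof -
  have d: "pochhammer (2 * (1/2::real)) (2 * n) = of_nat (2^(2*n)) * pochhammer (1/2) n * pochhammer (1/2+1/2) n"
    by (rule pochhammer_double)
  hence d': "fact (2*n) = 4^n * pochhammer (1/2::real) n * fact n"
    by (simp add: pochhammer_fact power_mult)
  have g: "((-1/2::real) gchoose n) = (-1)^n * pochhammer (1/2) n / fact n"
    by (simp add: gbinomial_pochhammer)
  have m: "(-4::real) ^ n = (-1)^n * 4^n"
    using power_mult_distrib[of "-1::real" 4 n] by simp
  have o: "(-1::real)^n * (-1)^n = 1"
    by (induct n) auto
  have "((-1/2::real) gchoose n) * (-4) ^ n = ((-1)^n * (-1)^n) * (4^n * pochhammer (1/2) n / fact n)"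
    unfolding g m by (simp only: mult_ac times_divide_eq_left times_divide_eq_right)
  also have "\<dots> = 4^n * pochhammer (1/2) n / fact n" unfolding o by simp
  also have "\<dots> = fact (2*n) / (fact n * fact n)"
    using d' by (simp add: field_simps)
  also have "\<dots> = real ((2*n) choose n)"
    by (subst binomial_fact) (auto simp: mult_2)
  finally show ?thesis .
qed

lemma central:
  fixes z :: real assumes "0 \<le> z" "z < 1/4"
  shows "(\<lambda>n. real ((2*n) choose n) * z ^ n) sums (1 / sqrt (1 - 4*z))"
proof -
  have "(\<lambda>n. ((-1/2::real) gchoose n) * (-4*z) ^ n) sums (1 + (-4*z)) powr (-1/2)"
    by (rule gen_binomial_real) (use assms in simp)
  moreover have "((-1/2::real) gchoose n) * (-4*z) ^ n = real ((2*n) choose n) * z ^ n" for n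
  proof -
    have "((-1/2::real) gchoose n) * (-4*z) ^ n = (((-1/2::real) gchoose n) * (-4) ^ n) * z ^ n"
      by (simp only: power_mult_distrib mult.assoc)
    then show ?thesis by (simp only: central_coeff)
  qed
  moreover have "(1 + (-4*z)) powr (-1/2) = 1 / sqrt (1 - 4*z)"
  proof -
    have "(1 + (-4*z)) powr (-1/2) = 1 / (1 - 4*z) powr (1/2)"
      using powr_minus_divide[of "1-4*z" "1/2"] by simp
    also have "(1 - 4*z) powr (1/2) = sqrt (1 - 4*z)"
      using assms by (intro powr_half_sqrt) simp
    finally show ?thesis .
  qed
  ultimately show ?thesis by simp
qed



definition GG :: "real \<Rightarrow> nat \<Rightarrow> nat \<Rightarrow> real" where
  "GG z a b = (\<Sum>n. real ((a + b + 2*n) choose (a + n)) * z ^ n)"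

definition AA :: "real \<Rightarrow> nat \<Rightarrow> nat \<Rightarrow> real" where
  "AA w a b = (if b = 0 then 0 else (\<Sum>n. real ((a + b + n - 1) choose (b - 1)) * w ^ n))"

lemma G_summable:
  fixes z :: real assumes "0 \<le> z" "z < 1/4"
  shows "summable (\<lambda>n. real ((a + b + 2*n) choose (a + n)) * z ^ n)"
proof (rule summable_comparison_test')
  show "summable (\<lambda>n. 2^(a+b) * (4*z) ^ n)"
    using assms by (intro summable_mult summable_geometric) simp
  fix n
  have "real ((a + b + 2*n) choose (a + n)) \<le> 2 ^ (a + b + 2*n)"
    using binomial_le_pow2[of "a + b + 2*n" "a+n"] by (metis of_nat_le_iff of_nat_numeral of_nat_power)
  also have "(2::real) ^ (a + b + 2*n) = 2^(a+b) * 4^n"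
    by (simp add: power_add power_mult)
  finally have "real ((a + b + 2*n) choose (a + n)) * z ^ n \<le> 2^(a+b) * 4^n * z^n"
    using assms by (intro mult_right_mono) auto
  then show "norm (real ((a + b + 2*n) choose (a + n)) * z ^ n) \<le> 2^(a+b) * (4*z) ^ n"
    using assms by (simp add: power_mult_distrib mult_ac)
qed

lemma A_summable:
  fixes w :: real assumes "0 < w" "w < 1" "b \<ge> 1"
  shows "summable (\<lambda>n. real ((a + b + n - 1) choose (b - 1)) * w ^ n)"
proof -
  define j where "j = b - 1"
  have "summable (\<lambda>m. real ((m + j) choose j) * w ^ m)"
    using negbin[of w j] assms by (auto simp: sums_iff)
  hence "summable (\<lambda>n. real ((n + a + j) choose j) * w ^ (n + a))"
    by (subst summable_iff_shift) 
  hence "summable (\<lambda>n. (real ((n + a + j) choose j) * w ^ (n + a)) * (1 / w ^ a))"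
    by (rule summable_mult2)
  moreover have "(\<lambda>n. (real ((n + a + j) choose j) * w ^ (n + a)) * (1 / w ^ a)) = (\<lambda>n. real ((a + b + n - 1) choose (b - 1)) * w ^ n)"
    using assms by (intro ext) (simp add: j_def power_add ac_simps)
  ultimately show ?thesis by (simp only:)
qed

lemma G_sym: "GG z a b = GG z b a"
  unfolding GG_def
proof (intro arg_cong[where f=suminf] ext)
  fix n
  have "(a + b + 2*n) choose (a + n) = (a + b + 2*n) choose (a + b + 2*n - (a + n))"
    by (rule binomial_symmetric) simp
  also have "a + b + 2*n - (a + n) = b + n" by simp
  finally show "real ((a + b + 2*n) choose (a + n)) * z ^ n = real ((b + a + 2*n) choose (b + n)) * z ^ n"
    by (simp add: add.commute)
qed

lemma G_rec:
  fixes z :: real assumes "0 \<le> z" "z < 1/4" "a \<ge> 1" "b \<ge> 1"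
  shows "GG z a b = GG z (a-1) b + GG z a (b-1)"
proof -
  have "a = Suc (a - 1)" "b = Suc (b - 1)" using assms by simp_all
  then obtain a' b' where ab: "a = Suc a'" "b = Suc b'" by blast
  have t: "real ((a + b + 2*n) choose (a + n)) * z ^ n =
      real ((a - 1 + b + 2*n) choose (a - 1 + n)) * z ^ n + real ((a + (b-1) + 2*n) choose (a + n)) * z ^ n" for n
  proof -
    have "a + b + 2*n = Suc (a' + b' + 1 + 2*n)" "a + n = Suc (a' + n)" using ab by auto
    hence "(a + b + 2*n) choose (a + n) = ((a' + b' + 1 + 2*n) choose (a' + n)) + ((a' + b' + 1 + 2*n) choose (Suc (a' + n)))"
      by simp
    then show ?thesis using ab by (simp add: algebra_simps)
  qed
  have s1: "summable (\<lambda>n. real ((a - 1 + b + 2*n) choose (a - 1 + n)) * z ^ n)"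
    by (rule G_summable) (use assms in auto)
  have s2: "summable (\<lambda>n. real ((a + (b-1) + 2*n) choose (a + n)) * z ^ n)"
    by (rule G_summable) (use assms in auto)
  show ?thesis unfolding GG_def
    by (subst t, rule suminf_add[symmetric, OF s1 s2])
qed



lemma G_rec0:
  fixes z :: real assumes "0 \<le> z" "z < 1/4" "a \<ge> 1"
  shows "GG z a 0 = GG z (a-1) 0 + z * GG z (a+1) 0"
proof -
  have "a = Suc (a - 1)" using assms by simp
  then obtain a' where a: "a = Suc a'" by blast
  define f where "f n = real ((a' + 2*n) choose (Suc (a' + n))) * z ^ n" for n
  have fs: "f (Suc m) = z * (real ((a + 1 + 0 + 2*m) choose (a + 1 + m)) * z ^ m)" for m
    by (simp add: f_def a algebra_simps)
  have sG: "summable (\<lambda>m. real ((a + 1 + 0 + 2*m) choose (a + 1 + m)) * z ^ m)"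
    by (rule G_summable) (use assms in auto)
  have sf': "summable (\<lambda>m. f (Suc m))"
    unfolding fs by (rule summable_mult[OF sG])
  hence sf: "summable f" by (simp add: summable_Suc_iff)
  have "suminf f = (\<Sum>m. f (Suc m)) + f 0" using suminf_split_head[OF sf] by simp
  also have "f 0 = 0" by (simp add: f_def)
  also have "(\<Sum>m. f (Suc m)) = z * GG z (a+1) 0"
    unfolding fs GG_def by (rule suminf_mult[OF sG])
  finally have sumf: "suminf f = z * GG z (a+1) 0" by simp
  have t: "real ((a + 0 + 2*n) choose (a + n)) * z ^ n =
      real ((a' + 0 + 2*n) choose (a' + n)) * z ^ n + f n" for n
  proof -
    have "a + 2*n = Suc (a' + 2*n)" "a + n = Suc (a' + n)" using a by auto
    hence "(a + 2*n) choose (a + n) = ((a' + 2*n) choose (a' + n)) + ((a' + 2*n) choose (Suc (a' + n)))"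
      by simp
    then show ?thesis by (simp add: f_def algebra_simps)
  qed
  have sA: "summable (\<lambda>n. real ((a' + 0 + 2*n) choose (a' + n)) * z ^ n)"
    by (rule G_summable) (use assms in auto)
  have "GG z a 0 = GG z a' 0 + suminf f"
    unfolding GG_def by (subst t, rule suminf_add[symmetric]) (rule sA, rule sf)
  then show ?thesis using a sumf by simp
qed

lemma G_1:
  fixes z :: real assumes "0 < z" "z < 1/4"
  shows "2 * z * GG z 1 0 = GG z 0 0 - 1"
proof -
  define h where "h m = real ((0 + 0 + 2*m) choose (0 + m)) * z ^ m" for m
  have sh: "summable h" unfolding h_def by (intro G_summable) (use assms in auto)
  have "GG z 0 0 = (\<Sum>m. h (Suc m)) + h 0" unfolding GG_def h_def[symmetric]
    using suminf_split_head[OF sh] by simp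
  moreover have "h 0 = 1" by (simp add: h_def)
  moreover have "h (Suc m) = 2 * z * (real ((1 + 0 + 2*m) choose (1 + m)) * z ^ m)" for m
  proof -
    have "Suc (Suc (2*m)) choose Suc m = (Suc (2*m) choose m) + (Suc (2*m) choose Suc m)" by simp
    moreover have "Suc (2*m) choose m = Suc (2*m) choose (Suc (2*m) - m)"
      by (rule binomial_symmetric) simp
    moreover have "Suc (2*m) - m = Suc m" by simp
    ultimately have "Suc (Suc (2*m)) choose Suc m = 2 * (Suc (2*m) choose Suc m)" by simp
    then show ?thesis by (simp add: h_def algebra_simps)
  qed
  ultimately have "GG z 0 0 = (\<Sum>m. 2 * z * (real ((1 + 0 + 2*m) choose (1 + m)) * z ^ m)) + 1" by simp
  also have "(\<Sum>m. 2 * z * (real ((1 + 0 + 2*m) choose (1 + m)) * z ^ m)) = 2 * z * GG z 1 0"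
  proof -
    have sG: "summable (\<lambda>m. real ((1 + 0 + 2*m) choose (1 + m)) * z ^ m)"
      by (rule G_summable) (use assms in auto)
    show ?thesis unfolding GG_def by (rule suminf_mult[OF sG])
  qed
  finally show ?thesis by simp
qed

lemma alg1:
  fixes p d u :: real
  assumes "p \<noteq> 0" "d \<noteq> 0" "u \<noteq> 0" "1 - u \<noteq> 0"
  shows "(1 / (p * (1 - u) * d) - 1 / (p * d)) / (u * (1 - u)) = 1 / (p * (1 - u) * (1 - u) * d)"
proof -
  define q where "q = 1 - u"
  have q: "q \<noteq> 0" "u = 1 - q" using assms by (auto simp: q_def)
  have "1 / (p * q * d) - 1 / (p * d) = (1 - q) / (p * q * d)"
    using assms q by (simp add: field_simps)
  also have "\<dots> = u / (p * q * d)" using q by simp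
  finally have "(1 / (p * q * d) - 1 / (p * d)) / (u * q) = (u / (p * q * d)) / (u * q)" by simp
  also have "\<dots> = 1 / (p * q * q * d)" using assms q by (simp add: field_simps)
  finally show ?thesis by (simp add: q_def)
qed

lemma G_a0:
  fixes u :: real assumes "0 < u" "u < 1/2"
  shows "GG (u * (1 - u)) a 0 = 1 / ((1 - u) ^ a * (1 - 2*u))"
proof -
  define z where "z = u * (1 - u)"
  have z0: "0 < z" using assms by (simp add: z_def)
  have z1: "z < 1/4"
  proof -
    have "0 < (1 - 2*u)^2" using assms by simp
    then show ?thesis by (simp add: z_def power2_eq_square algebra_simps)
  qed
  have sq: "sqrt (1 - 4*z) = 1 - 2*u"
  proof -
    have "1 - 4*z = (1 - 2*u)^2" by (simp add: z_def power2_eq_square algebra_simps)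
    then show ?thesis using assms by simp
  qed
  have G0: "GG z 0 0 = 1 / (1 - 2*u)"
    using central[of z] z0 z1 sq unfolding GG_def by (simp add: sums_iff)
  have nz: "1 - 2*u \<noteq> 0" "1 - u \<noteq> 0" "u \<noteq> 0" using assms by auto
  have G1: "GG z 1 0 = 1 / ((1 - u) * (1 - 2*u))"
  proof -
    have "2 * z * GG z 1 0 = 1 / (1 - 2*u) - 1" using G_1[OF z0 z1] G0 by simp
    hence "(1 - 2*u) * (2 * z * GG z 1 0) = (1 - 2*u) * (1 / (1 - 2*u) - 1)" by simp
    also have "\<dots> = 2 * u" using nz by (simp add: right_diff_distrib)
    finally have "(1 - 2*u) * (2 * z * GG z 1 0) = 2 * u" .
    hence "(2 * u) * ((1 - u) * (1 - 2*u) * GG z 1 0) = (2 * u) * 1" by (simp add: z_def algebra_simps)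
    hence "(1 - u) * (1 - 2*u) * GG z 1 0 = 1" using nz by (simp only: mult_left_cancel)
    moreover have nX: "(1 - u) * (1 - 2*u) \<noteq> 0" using nz by simp
    have "GG z 1 0 = ((1 - u) * (1 - 2*u) * GG z 1 0) / ((1 - u) * (1 - 2*u))"
      by (rule nonzero_mult_div_cancel_left[symmetric, OF nX])
    ultimately show ?thesis by (simp only:)
  qed
  have "GG z a 0 = 1 / ((1 - u) ^ a * (1 - 2*u)) \<and> GG z (Suc a) 0 = 1 / ((1 - u) ^ Suc a * (1 - 2*u))"
  proof (induction a)
    case 0 then show ?case using G0 G1 by simp
  next
    case (Suc a)
    have r: "GG z (Suc a) 0 = GG z a 0 + z * GG z (Suc (Suc a)) 0"
      using G_rec0[of z "Suc a"] z0 z1 by simp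
    have "GG z (Suc (Suc a)) 0 = (GG z (Suc a) 0 - GG z a 0) / z"
      using r z0 by (simp add: field_simps)
    also have "\<dots> = (1 / ((1 - u) ^ a * (1 - u) * (1 - 2*u)) - 1 / ((1 - u) ^ a * (1 - 2*u))) / (u * (1 - u))"
      using Suc.IH by (simp add: z_def mult_ac)
    also have "\<dots> = 1 / ((1 - u) ^ a * (1 - u) * (1 - u) * (1 - 2*u))"
      by (rule alg1) (use nz in auto)
    also have "\<dots> = 1 / ((1 - u) ^ Suc (Suc a) * (1 - 2*u))"
      by (simp add: mult_ac)
    finally show ?case using Suc.IH by simp
  qed
  then show ?thesis by (simp add: z_def)
qed

lemma A0:
  fixes w :: real assumes "0 < w" "w < 1" "b \<ge> 1"
  shows "AA w 0 b = 1 / (1 - w) ^ b"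
proof -
  have "(\<lambda>n. real ((n + (b-1)) choose (b-1)) * w ^ n) sums (1 / (1 - w) ^ Suc (b-1))"
    using negbin[of w "b-1"] assms by simp
  moreover have "Suc (b-1) = b" using assms by simp
  moreover have "\<And>n. 0 + b + n - 1 = n + (b - 1)" using assms by simp
  ultimately show ?thesis using assms unfolding AA_def by (simp add: sums_iff)
qed

lemma A_rec:
  fixes w :: real assumes "0 < w" "w < 1" "a \<ge> 1" "b \<ge> 1"
  shows "AA w a b = AA w (a-1) b + AA w a (b-1)"
proof (cases "b = 1")
  case True
  have e1: "AA w a 1 = (\<Sum>n. w ^ n)" by (simp add: AA_def)
  have e2: "AA w (a-1) 1 = (\<Sum>n. w ^ n)" by (simp add: AA_def)
  have e3: "AA w a 0 = 0" by (simp add: AA_def)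
  show ?thesis by (simp only: True e1 e2 e3 diff_self_eq_0 add_0_right)
next
  case False
  have "b = Suc (Suc (b - 2))" using assms False by simp
  then obtain b' where b: "b = Suc (Suc b')" by blast
  have "a = Suc (a - 1)" using assms by simp
  then obtain a' where a: "a = Suc a'" by blast
  have t: "real ((a + b + n - 1) choose (b - 1)) * w ^ n =
     real ((a - 1 + b + n - 1) choose (b - 1)) * w ^ n + real ((a + (b - 1) + n - 1) choose (b - 1 - 1)) * w ^ n" for n
  proof -
    have "a + b + n - 1 = Suc (a' + b' + 1 + n)" "b - 1 = Suc b'" using a b by auto
    hence "(a + b + n - 1) choose (b - 1) = ((a' + b' + 1 + n) choose b') + ((a' + b' + 1 + n) choose (Suc b'))"
      by simp
    then show ?thesis using a b by (simp add: algebra_simps)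
  qed
  have nb: "b \<noteq> 0" "b - 1 \<noteq> 0" using b by auto
  have sA1: "summable (\<lambda>n. real ((a - 1 + b + n - 1) choose (b - 1)) * w ^ n)"
    by (rule A_summable) (use assms in auto)
  have sA2: "summable (\<lambda>n. real ((a + (b - 1) + n - 1) choose (b - 1 - 1)) * w ^ n)"
    by (rule A_summable) (use assms b in auto)
  have eA: "AA w a b = (\<Sum>n. real ((a + b + n - 1) choose (b - 1)) * w ^ n)"
    using nb by (simp add: AA_def)
  have eB: "AA w (a-1) b = (\<Sum>n. real ((a - 1 + b + n - 1) choose (b - 1)) * w ^ n)"
    using nb by (simp add: AA_def)
  have eC: "AA w a (b-1) = (\<Sum>n. real ((a + (b - 1) + n - 1) choose (b - 1 - 1)) * w ^ n)"
    using nb by (simp add: AA_def)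
  show ?thesis unfolding eA eB eC t by (rule suminf_add[symmetric, OF sA1 sA2])
qed



lemma z_bounds:
  fixes u :: real assumes "0 < u" "u < 1/2"
  shows "0 \<le> u * (1 - u)" "u * (1 - u) < 1/4"
proof -
  show "0 \<le> u * (1 - u)" using assms by simp
  have "0 < (1 - 2*u)^2" using assms by simp
  then show "u * (1 - u) < 1/4" by (simp add: power2_eq_square algebra_simps)
qed

lemma E_lemma:
  fixes u :: real assumes u: "0 < u" "u < 1/2"
  shows "a + b \<ge> 1 \<Longrightarrow> (1 - 2*u) * GG (u * (1 - u)) a b = AA u a b + AA u b a"
proof (induction "a + b" arbitrary: a b rule: less_induct)
  case less
  note zb = z_bounds[OF u]
  have u1: "0 < u" "u < 1" using u by auto
  have nz: "1 - 2*u \<noteq> 0" using u by simp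
  show ?case
  proof (cases "a = 0 \<or> b = 0")
    case True
    have base: "(1 - 2*u) * GG (u * (1 - u)) c 0 = AA u c 0 + AA u 0 c" if "c \<ge> 1" for c
    proof -
      have "(1 - 2*u) * GG (u * (1 - u)) c 0 = 1 / (1 - u) ^ c"
        using G_a0[OF u, of c] nz by simp
      moreover have "AA u 0 c = 1 / (1 - u) ^ c" by (rule A0) (use u1 that in auto)
      moreover have "AA u c 0 = 0" by (simp add: AA_def)
      ultimately show ?thesis by simp
    qed
    show ?thesis
    proof (cases "b = 0")
      case True then show ?thesis using base[of a] less.prems by simp
    next
      case False
      with \<open>a = 0 \<or> b = 0\<close> have "a = 0" by simp
      then show ?thesis using base[of b] less.prems G_sym[of "u * (1 - u)" 0 b] by (simp add: add.commute)
    qed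
  next
    case False
    hence ab: "a \<ge> 1" "b \<ge> 1" by auto
    have IH1: "(1 - 2*u) * GG (u * (1 - u)) (a-1) b = AA u (a-1) b + AA u b (a-1)"
      using less.hyps[of "a-1" b] ab by simp
    have IH2: "(1 - 2*u) * GG (u * (1 - u)) a (b-1) = AA u a (b-1) + AA u (b-1) a"
      using less.hyps[of a "b-1"] ab by simp
    have "GG (u * (1 - u)) a b = GG (u * (1 - u)) (a-1) b + GG (u * (1 - u)) a (b-1)"
      by (rule G_rec) (use zb ab in auto)
    moreover have "AA u a b = AA u (a-1) b + AA u a (b-1)" by (rule A_rec) (use u1 ab in auto)
    moreover have "AA u b a = AA u (b-1) a + AA u b (a-1)" by (rule A_rec) (use u1 ab in auto)
    ultimately show ?thesis using IH1 IH2 by (simp add: algebra_simps)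
  qed
qed

lemma alg2:
  fixes u q P Q :: real assumes "u \<noteq> 0" "q \<noteq> 0" "P \<noteq> 0" "Q \<noteq> 0" "u + q = 1"
  shows "1 / (u * P * Q) + 1 / (P * (q * Q)) = 1 / (u * P * (q * Q))"
proof -
  have "1 / (u * P * Q) + 1 / (P * (q * Q)) = (q + u) / (u * P * (q * Q))"
    using assms by (simp add: field_simps)
  then show ?thesis using assms by (simp add: add.commute)
qed

lemma D_lemma:
  fixes u :: real assumes u: "0 < u" "u < 1"
  shows "a + b \<ge> 1 \<Longrightarrow> AA u b a + AA (1 - u) a b = 1 / (u ^ b * (1 - u) ^ a)"
proof (induction "a + b" arbitrary: a b rule: less_induct)
  case less
  show ?case
  proof (cases "a = 0 \<or> b = 0")
    case True
    show ?thesis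
    proof (cases "b = 0")
      case True
      then have "a \<ge> 1" using less.prems by simp
      then show ?thesis using True A0[of u a] u by (simp add: AA_def)
    next
      case False
      with \<open>a = 0 \<or> b = 0\<close> have "a = 0" by simp
      then show ?thesis using False A0[of "1-u" b] u by (simp add: AA_def)
    qed
  next
    case False
    then have "a = Suc (a - 1)" "b = Suc (b - 1)" by simp_all
    then obtain a' b' where ab: "a = Suc a'" "b = Suc b'" by blast
    have IH1: "AA u b a' + AA (1 - u) a' b = 1 / (u ^ b * (1 - u) ^ a')"
      using less.hyps[of a' b] ab by simp
    have IH2: "AA u b' a + AA (1 - u) a b' = 1 / (u ^ b' * (1 - u) ^ a)"
      using less.hyps[of a b'] ab by simp
    have "AA u b a = AA u b' a + AA u b a'" using A_rec[of u b a] u ab by simp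
    moreover have "AA (1 - u) a b = AA (1 - u) a' b + AA (1 - u) a b'" using A_rec[of "1-u" a b] u ab by simp
    ultimately have "AA u b a + AA (1 - u) a b = 1 / (u ^ b * (1 - u) ^ a') + 1 / (u ^ b' * (1 - u) ^ a)"
      using IH1 IH2 by simp
    also have "\<dots> = 1 / (u * u ^ b' * (1 - u) ^ a') + 1 / (u ^ b' * ((1 - u) * (1 - u) ^ a'))"
      using ab by simp
    also have "\<dots> = 1 / (u * u ^ b' * ((1 - u) * (1 - u) ^ a'))"
      by (rule alg2) (use u in auto)
    also have "\<dots> = 1 / (u ^ b * (1 - u) ^ a)" using ab by (simp add: mult_ac)
    finally show ?thesis .
  qed
qed



lemma H3:
  fixes x :: real assumes "0 < x" "x < 1"
  shows "hyp3F2 1 (real (k1 + k2) / 2 + 1) ((real (k1 + k2) + 1) / 2) (real k1 + 1) (real k2 + 1) x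
     = fact k1 * fact k2 / fact (k1 + k2) * GG (x / 4) k1 k2"
proof -
  define K where "K = k1 + k2"
  define c :: real where "c = fact k1 * fact k2 / fact K"
  have t: "pochhammer 1 n * pochhammer (real K / 2 + 1) n * pochhammer ((real K + 1) / 2) n
      / (pochhammer (real k1 + 1) n * pochhammer (real k2 + 1) n) * x ^ n / fact n
      = c * (real ((k1 + k2 + 2*n) choose (k1 + n)) * (x/4) ^ n)" for n
  proof -
    have d: "pochhammer (2 * ((real K + 1) / 2)) (2 * n) = of_nat (2^(2*n)) * pochhammer ((real K + 1) / 2) n * pochhammer ((real K + 1) / 2 + 1/2) n"
      by (rule pochhammer_double)
    have e1: "2 * ((real K + 1) / 2) = real K + 1" by simp
    have e2: "(real K + 1) / 2 + 1/2 = real K / 2 + 1" by (simp add: field_simps)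
    have d': "fact (K + 2*n) / fact K = 4^n * pochhammer ((real K + 1) / 2) n * pochhammer (real K / 2 + 1) n"
      using d unfolding e1 e2 poch_fact by (simp add: power_mult)
    have b: "real ((k1 + k2 + 2*n) choose (k1 + n)) = fact (K + 2*n) / (fact (k1 + n) * fact (k2 + n))"
      by (subst binomial_fact) (auto simp: K_def intro: arg_cong[where f=fact])
    have p1: "pochhammer (real k1 + 1) n = fact (k1 + n) / fact k1" by (rule poch_fact)
    have p2: "pochhammer (real k2 + 1) n = fact (k2 + n) / fact k2" by (rule poch_fact)
    have "pochhammer ((real K + 1) / 2) n * pochhammer (real K / 2 + 1) n = fact (K + 2*n) / fact K / 4^n"
      using d' by (simp add: field_simps)
    then show ?thesis
      unfolding b p1 p2 c_def pochhammer_fact[symmetric]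
      by (simp add: field_simps power_divide)
  qed
  have sG: "summable (\<lambda>n. real ((K + 2*n) choose (k1 + n)) * (x/4) ^ n)"
    unfolding K_def by (rule G_summable) (use assms in auto)
  show ?thesis
    unfolding hyp3F2_def GG_def K_def[symmetric] t c_def[symmetric]
    by (rule suminf_mult[OF sG])
qed

lemma H2:
  fixes w :: real assumes "0 < w" "w < 1" "k1 + k2 \<ge> 1"
  shows "real k2 * hyp2F1 1 (real (k1 + k2)) (real k1 + 1) w
     = fact k1 * fact k2 / fact (k1 + k2) * real (k1 + k2) * AA w k1 k2"
proof (cases "k2 = 0")
  case True then show ?thesis by (simp add: AA_def)
next
  case False
  then have "k2 = Suc (k2 - 1)" by simp
  then obtain j where j: "k2 = Suc j" by blast
  define C :: real where "C = fact k1 * fact k2 / fact (k1 + k2) * real (k1 + k2)"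
  have t: "real k2 * (pochhammer 1 n * pochhammer (real (k1 + k2)) n / pochhammer (real k1 + 1) n * w ^ n / fact n)
      = C * (real ((k1 + k2 + n - 1) choose (k2 - 1)) * w ^ n)" for n
  proof -
    have rk: "real (k1 + k2) = real (k1 + j) + 1" using j by simp
    have pK: "pochhammer (real (k1 + k2)) n = fact (k1 + j + n) / fact (k1 + j)"
      unfolding rk by (rule poch_fact)
    have p1: "pochhammer (real k1 + 1) n = fact (k1 + n) / fact k1" by (rule poch_fact)
    have b: "real ((k1 + k2 + n - 1) choose (k2 - 1)) = fact (k1 + j + n) / (fact j * fact (k1 + n))"
      using j by (subst binomial_fact) (auto intro: arg_cong[where f=fact])
    have fk2: "fact k2 = real k2 * fact j" using j by simp
    have fK: "fact (k1 + k2) = real (k1 + k2) * fact (k1 + j)" using j by simp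
    define S where "S = real k2"
    define T where "T = real (k1 + k2)"
    have T0: "T \<noteq> 0" using j by (simp add: T_def)
    have S0: "S \<noteq> 0" using j by (simp add: S_def)
    define Fn where "Fn = (fact n :: real)"
    define FL where "FL = (fact (k1 + j) :: real)"
    define FLn where "FLn = (fact (k1 + j + n) :: real)"
    define F1n where "F1n = (fact (k1 + n) :: real)"
    define Fk1 where "Fk1 = (fact k1 :: real)"
    define Fj where "Fj = (fact j :: real)"
    have nz: "Fn \<noteq> 0" "FL \<noteq> 0" "F1n \<noteq> 0" "Fk1 \<noteq> 0" "Fj \<noteq> 0"
      by (simp_all add: Fn_def FL_def F1n_def Fk1_def Fj_def)
    have "S * (Fn * (FLn / FL) / (F1n / Fk1) * w ^ n / Fn)
        = Fk1 * (S * Fj) / (T * FL) * T * (FLn / (Fj * F1n) * w ^ n)"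
      using nz T0 by (simp add: field_simps)
    then show ?thesis
      unfolding b pK p1 C_def pochhammer_fact[symmetric] fk2 fK
      unfolding S_def T_def Fn_def FL_def FLn_def F1n_def Fk1_def Fj_def .
  qed
  have sA: "summable (\<lambda>n. real ((k1 + k2 + n - 1) choose (k2 - 1)) * w ^ n)"
    by (rule A_summable) (use assms False in auto)
  define f where "f = (\<lambda>n. pochhammer 1 n * pochhammer (real (k1 + k2)) n / pochhammer (real k1 + 1) n * w ^ n / fact n)"
  define S where "S = (\<Sum>n. real ((k1 + k2 + n - 1) choose (k2 - 1)) * w ^ n)"
  have "(\<lambda>n. C * (real ((k1 + k2 + n - 1) choose (k2 - 1)) * w ^ n)) sums (C * S)"
    unfolding S_def by (rule sums_mult[OF summable_sums[OF sA]])
  hence "(\<lambda>n. real k2 * f n) sums (C * S)" unfolding f_def t .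
  hence "(\<lambda>n. real k2 * f n / real k2) sums (C * S / real k2)" by (rule sums_divide)
  moreover have "(\<lambda>n. real k2 * f n / real k2) = f" using False by (intro ext) simp
  ultimately have fs: "f sums (C * S / real k2)" by simp
  have "hyp2F1 1 (real (k1 + k2)) (real k1 + 1) w = suminf f"
    unfolding hyp2F1_def f_def by (rule refl)
  also have "\<dots> = C * S / real k2" using fs by (simp add: sums_iff)
  finally have "real k2 * hyp2F1 1 (real (k1 + k2)) (real k1 + 1) w = C * S"
    using False by simp
  moreover have "AA w k1 k2 = S" using False by (simp add: AA_def S_def)
  ultimately show ?thesis by (simp add: C_def)
qed



lemma pow_part:
  fixes u q :: real assumes "0 < u" "0 < q"
  shows "2 ^ (k1 + k2) / (4 * u * q) ^ k2 * (2 * q) powi (int k2 - int k1) = 1 / (u ^ k2 * q ^ k1)"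
proof -
  have a: "(2 * q) powi (int k2 - int k1) = (2 ^ k2 * q ^ k2) / (2 ^ k1 * q ^ k1)"
    using assms by (simp add: power_int_diff power_mult_distrib)
  have b: "(4 * u * q) ^ k2 = 2 ^ k2 * 2 ^ k2 * u ^ k2 * q ^ k2"
  proof -
    have "(4 * u * q) ^ k2 = (2 * 2 * u * q) ^ k2" by simp
    also have "\<dots> = 2 ^ k2 * 2 ^ k2 * u ^ k2 * q ^ k2" by (simp only: power_mult_distrib)
    finally show ?thesis .
  qed
  have c: "(2::real) ^ (k1 + k2) = 2 ^ k1 * 2 ^ k2" by (simp add: power_add)
  define A where "A = (2::real) ^ k1"
  define C where "C = (2::real) ^ k2"
  define U where "U = u ^ k2"
  define Q2 where "Q2 = q ^ k2"
  define Q1 where "Q1 = q ^ k1"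
  have nz: "A \<noteq> 0" "C \<noteq> 0" "U \<noteq> 0" "Q2 \<noteq> 0" "Q1 \<noteq> 0" using assms by (auto simp: A_def C_def U_def Q1_def Q2_def)
  have "A * C / (C * C * U * Q2) * (C * Q2 / (A * Q1)) = 1 / (U * Q1)"
    using nz by (simp add: field_simps)
  then show ?thesis unfolding a b c A_def C_def U_def Q1_def Q2_def .
qed

theorem theorem2:
  fixes k1 k2 :: nat and x :: real
  assumes "k1 + k2 \<ge> 1" and "0 < x" and "x < 1"
  shows "hyp3F2 1 (real (k1 + k2) / 2 + 1) ((real (k1 + k2) + 1) / 2) (real k1 + 1) (real k2 + 1) x
          = fact k1 * fact k2 / fact (k1 + k2) * (2 ^ (k1 + k2) / x ^ k2)
              * ((1 + sqrt (1 - x)) powi (int k2 - int k1) / sqrt (1 - x))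
            + real k2 / (real (k1 + k2) * sqrt (1 - x))
              * (hyp2F1 1 (real (k1 + k2)) (real k1 + 1) (1/2 - 1/2 * sqrt (1 - x))
                 - hyp2F1 1 (real (k1 + k2)) (real k1 + 1) (1/2 + 1/2 * sqrt (1 - x)))
       \<and> hyp3F2 1 (real (k1 + k2) / 2 + 1) ((real (k1 + k2) + 1) / 2) (real k1 + 1) (real k2 + 1) x
          = 1 / (real (k1 + k2) * sqrt (1 - x))
              * (real k2 * hyp2F1 1 (real (k1 + k2)) (real k1 + 1) (1/2 - 1/2 * sqrt (1 - x))
                 + real k1 * hyp2F1 1 (real (k1 + k2)) (real k2 + 1) (1/2 - 1/2 * sqrt (1 - x)))"
proof -
  define s where "s = sqrt (1 - x)"
  define u where "u = 1/2 - 1/2 * s"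
  define K where "K = k1 + k2"
  define c :: real where "c = fact k1 * fact k2 / fact K"
  define LHS where "LHS = hyp3F2 1 (real (k1 + k2) / 2 + 1) ((real (k1 + k2) + 1) / 2) (real k1 + 1) (real k2 + 1) x"
  define Fu where "Fu = hyp2F1 1 (real (k1 + k2)) (real k1 + 1) (1/2 - 1/2 * s)"
  define Fv where "Fv = hyp2F1 1 (real (k1 + k2)) (real k1 + 1) (1/2 + 1/2 * s)"
  define Gu where "Gu = hyp2F1 1 (real (k1 + k2)) (real k2 + 1) (1/2 - 1/2 * s)"
  have s0: "0 < s" "s < 1" using assms by (auto simp: s_def real_sqrt_lt_1_iff)
  have ss: "s * s = 1 - x" using assms by (simp add: s_def)
  have u0: "0 < u" "u < 1/2" using s0 by (auto simp: u_def)
  have q: "1/2 + 1/2 * s = 1 - u" by (simp add: u_def)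
  have uq: "u * (1 - u) = x / 4" using ss by (simp add: u_def algebra_simps)
  have ds: "1 - 2*u = s" by (simp add: u_def)
  have K0: "real K \<noteq> 0" using assms by (simp add: K_def)
  define A12 where "A12 = AA u k1 k2"
  define A21 where "A21 = AA u k2 k1"
  define B where "B = AA (1 - u) k1 k2"
  have E: "s * GG (x/4) k1 k2 = A12 + A21"
    using E_lemma[OF u0, of k1 k2] assms ds uq by (simp add: A12_def A21_def)
  have G: "GG (x/4) k1 k2 = (A12 + A21) / s"
    using E s0 by (simp add: eq_divide_eq mult.commute)
  have L: "LHS = c * (A12 + A21) / s"
    unfolding LHS_def H3[OF assms(2,3)] G c_def K_def by simp
  have F1: "real k2 * Fu = c * real K * A12"
    using H2[of u k1 k2] u0 assms unfolding Fu_def u_def[symmetric] by (simp add: c_def K_def A12_def)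
  have kk: "k2 + k1 = k1 + k2" by simp
  have F2: "real k1 * Gu = c * real K * A21"
    using H2[of u k2 k1] u0 assms unfolding Gu_def u_def[symmetric] kk by (simp add: c_def K_def A21_def mult_ac)
  have F3: "real k2 * Fv = c * real K * B"
    using H2[of "1 - u" k1 k2] u0 assms unfolding Fv_def q by (simp add: c_def K_def B_def)
  have D: "A21 + B = 1 / (u ^ k2 * (1 - u) ^ k1)"
    using D_lemma[of u k1 k2] u0 assms by (simp add: A21_def B_def)
  have P: "2 ^ K / x ^ k2 * (1 + s) powi (int k2 - int k1) = 1 / (u ^ k2 * (1 - u) ^ k1)"
  proof -
    have x: "x = 4 * u * (1 - u)" using uq by simp
    have s1: "1 + s = 2 * (1 - u)" by (simp add: u_def)
    show ?thesis unfolding x s1 K_def by (rule pow_part) (use u0 in auto)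
  qed
  have R2: "1 / (real K * s) * (real k2 * Fu + real k1 * Gu) = c * (A12 + A21) / s"
    unfolding F1 F2 using K0 s0 by (simp add: field_simps)
  have R1: "c * (2 ^ K / x ^ k2) * ((1 + s) powi (int k2 - int k1) / s)
            + real k2 / (real K * s) * (Fu - Fv) = c * (A12 + A21) / s"
  proof -
    have "real k2 / (real K * s) * (Fu - Fv) = 1 / (real K * s) * (real k2 * Fu - real k2 * Fv)"
      by (simp add: field_simps)
    also have "\<dots> = c * (A12 - B) / s" unfolding F1 F3 using K0 s0 by (simp add: field_simps)
    finally have 2: "real k2 / (real K * s) * (Fu - Fv) = c * (A12 - B) / s" .
    have "c * (2 ^ K / x ^ k2) * ((1 + s) powi (int k2 - int k1) / s) = c * (2 ^ K / x ^ k2 * (1 + s) powi (int k2 - int k1)) / s"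
      by simp
    also have "\<dots> = c * (A21 + B) / s" unfolding P D by simp
    finally have 1: "c * (2 ^ K / x ^ k2) * ((1 + s) powi (int k2 - int k1) / s) = c * (A21 + B) / s" .
    show ?thesis unfolding 1 2 using s0 by (simp add: field_simps)
  qed
  have C1: "LHS = c * (2 ^ K / x ^ k2) * ((1 + s) powi (int k2 - int k1) / s)
            + real k2 / (real K * s) * (Fu - Fv)" by (rule trans[OF L R1[symmetric]])
  have C2: "LHS = 1 / (real K * s) * (real k2 * Fu + real k1 * Gu)" by (rule trans[OF L R2[symmetric]])
  show ?thesis using C1 C2 unfolding LHS_def Fu_def Fv_def Gu_def c_def K_def s_def by blast
qed


end
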